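(* Let $G=\prod_{i=1}^tK[a_i,b_i]$ with $2\le b_1\le\cdots\le b_t$. Let $S$ be an irredundant set in $G$ and let $T\subseteq\mathrm{pn}[S]$ be chosen so that each vertex of $S$ has exactly one private neighbor in $T$. If $v_1,v_2\in T$ are distinct with $p(v_1)=p(v_2)$, then $v_1,v_2\in\mathrm{Lon}(S)$.
   Context: $K[a,b]$ is the balanced complete $b$-partite graph with $b$ parts of size $a$. Label the vertices of $K[a_i,b_i]$ by $\{0,\dots,a_ib_i-1\}$ so that two are adjacent iff they are not congruent mod $b_i$. A vertex $v$ of the direct product $\prod_i K[a_i,b_i]$ is a tuple $(v(1),\dots,v(t))$, and $p(v)=(v(1)\bmod b_1,\dots,v(t)\bmod b_t)$; $u,v$ are adjacent iff $p(u),p(v)$ differ in every coordinate. For $S\subseteq V(G)$, $v\in S$: $\mathrm{pn}[v;S]=N[v]\setminus N[S\setminus\{v\}]$ (closed neighborhoods), $\mathrm{pn}[S]=\bigcup_{v\in S}\mathrm{pn}[v;S]$; $S$ is irredundant if every $\mathrm{pn}[v;S]$ is nonempty. $\mathrm{Lon}(S)$ is the set of vertices of $S$ isolated in $G[S]$. *)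

theory Defs
  imports Main
begin

text \<open>The direct product G of K[a_i,b_i], i = 1..t. Vertices are functions
  v :: nat => nat with v i < a i * b i for i in {1..t} and v i = 0 outside {1..t}.\<close>

definition prodV :: "nat \<Rightarrow> (nat \<Rightarrow> nat) \<Rightarrow> (nat \<Rightarrow> nat) \<Rightarrow> (nat \<Rightarrow> nat) set" where
  "prodV t a b = {v. (\<forall>i\<in>{1..t}. v i < a i * b i) \<and> (\<forall>i. i \<notin> {1..t} \<longrightarrow> v i = 0)}"

definition pmap :: "nat \<Rightarrow> (nat \<Rightarrow> nat) \<Rightarrow> (nat \<Rightarrow> nat) \<Rightarrow> (nat \<Rightarrow> nat)" where
  "pmap t b v = (\<lambda>i. if i \<in> {1..t} then v i mod b i else 0)"

definition padj :: "nat \<Rightarrow> (nat \<Rightarrow> nat) \<Rightarrow> (nat \<Rightarrow> nat) \<Rightarrow> (nat \<Rightarrow> nat) \<Rightarrow> bool" where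
  "padj t b u v = (\<forall>i\<in>{1..t}. u i mod b i \<noteq> v i mod b i)"

definition cnbhd :: "nat \<Rightarrow> (nat \<Rightarrow> nat) \<Rightarrow> (nat \<Rightarrow> nat) \<Rightarrow> (nat \<Rightarrow> nat) \<Rightarrow> (nat \<Rightarrow> nat) set" where
  "cnbhd t a b v = {u \<in> prodV t a b. u = v \<or> padj t b u v}"

definition cnbhd_set :: "nat \<Rightarrow> (nat \<Rightarrow> nat) \<Rightarrow> (nat \<Rightarrow> nat) \<Rightarrow> (nat \<Rightarrow> nat) set \<Rightarrow> (nat \<Rightarrow> nat) set" where
  "cnbhd_set t a b X = (\<Union>x\<in>X. cnbhd t a b x)"

definition pn_v :: "nat \<Rightarrow> (nat \<Rightarrow> nat) \<Rightarrow> (nat \<Rightarrow> nat) \<Rightarrow> (nat \<Rightarrow> nat) set \<Rightarrow> (nat \<Rightarrow> nat) \<Rightarrow> (nat \<Rightarrow> nat) set" where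
  "pn_v t a b S v = cnbhd t a b v - cnbhd_set t a b (S - {v})"

definition pn :: "nat \<Rightarrow> (nat \<Rightarrow> nat) \<Rightarrow> (nat \<Rightarrow> nat) \<Rightarrow> (nat \<Rightarrow> nat) set \<Rightarrow> (nat \<Rightarrow> nat) set" where
  "pn t a b S = (\<Union>v\<in>S. pn_v t a b S v)"

definition irredundant :: "nat \<Rightarrow> (nat \<Rightarrow> nat) \<Rightarrow> (nat \<Rightarrow> nat) \<Rightarrow> (nat \<Rightarrow> nat) set \<Rightarrow> bool" where
  "irredundant t a b S \<longleftrightarrow> S \<subseteq> prodV t a b \<and> (\<forall>v\<in>S. pn_v t a b S v \<noteq> {})"

definition Lon :: "nat \<Rightarrow> (nat \<Rightarrow> nat) \<Rightarrow> (nat \<Rightarrow> nat) set \<Rightarrow> (nat \<Rightarrow> nat) set" where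
  "Lon t b S = {v \<in> S. \<forall>u\<in>S. \<not> padj t b u v}"

end

theory Submission
  imports Defs
begin

theorem lemma5p3:
  fixes t :: nat and a b :: "nat \<Rightarrow> nat"
    and S T :: "(nat \<Rightarrow> nat) set" and v1 v2 :: "nat \<Rightarrow> nat"
  assumes "t \<ge> 1"
    and "\<forall>i\<in>{1..t}. a i \<ge> 1"
    and "2 \<le> b 1"
    and "\<forall>i j. 1 \<le> i \<and> i \<le> j \<and> j \<le> t \<longrightarrow> b i \<le> b j"
    and "irredundant t a b S"
    and "T \<subseteq> pn t a b S"
    and "\<forall>s\<in>S. card (pn_v t a b S s \<inter> T) = 1"
    and "v1 \<in> T" and "v2 \<in> T" and "v1 \<noteq> v2"
    and "pmap t b v1 = pmap t b v2"
  shows "v1 \<in> Lon t b S \<and> v2 \<in> Lon t b S"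
proof -
  have irr: "\<And>v. \<not> padj t b v v" using assms(1) unfolding padj_def
    by (metis atLeastAtMost_iff order_refl)
  have sym: "\<And>u v. padj t b u v = padj t b v u" unfolding padj_def by metis
  have modeq: "\<And>i. i \<in> {1..t} \<Longrightarrow> v1 i mod b i = v2 i mod b i"
    using assms(11) unfolding pmap_def by (metis)
  have adj12: "\<And>u. padj t b u v1 = padj t b u v2"
    unfolding padj_def using modeq by auto
  have main: "\<And>x y. x \<in> T \<Longrightarrow> y \<in> T \<Longrightarrow> x \<noteq> y \<Longrightarrow> (\<And>u. padj t b u x = padj t b u y)
     \<Longrightarrow> x \<in> Lon t b S"
  proof -
    fix x y assume xT: "x \<in> T" and yT: "y \<in> T" and xy: "x \<noteq> y"
      and ad: "\<And>u. padj t b u x = padj t b u y"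
    obtain s1 where s1: "s1 \<in> S" "x \<in> pn_v t a b S s1" using xT assms(6) unfolding pn_def by blast
    obtain s2 where s2: "s2 \<in> S" "y \<in> pn_v t a b S s2" using yT assms(6) unfolding pn_def by blast
    have "s1 \<noteq> s2"
    proof
      assume "s1 = s2"
      then have "x \<in> pn_v t a b S s1 \<inter> T" "y \<in> pn_v t a b S s1 \<inter> T" using s1 s2 xT yT by auto
      moreover have "card (pn_v t a b S s1 \<inter> T) = 1" using assms(7) s1 by blast
      ultimately show False using xy by (metis card_1_singletonE singletonD)
    qed
    have xV: "x \<in> prodV t a b" and xN: "x = s1 \<or> padj t b x s1"
      using s1(2) unfolding pn_v_def cnbhd_def by auto
    have yV: "y \<in> prodV t a b" and ynot: "y \<notin> cnbhd_set t a b (S - {s2})"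
      using s2(2) unfolding pn_v_def cnbhd_def by auto
    have "x = s1"
    proof (rule ccontr)
      assume "x \<noteq> s1"
      with xN have "padj t b x s1" by simp
      then have "padj t b y s1" using ad sym by metis
      then have "y \<in> cnbhd_set t a b (S - {s2})"
        unfolding cnbhd_set_def cnbhd_def using yV s1(1) \<open>s1 \<noteq> s2\<close> by blast
      with ynot show False by simp
    qed
    have xnot: "x \<notin> cnbhd_set t a b (S - {x})"
      using s1(2) \<open>x = s1\<close> unfolding pn_v_def by auto
    show "x \<in> Lon t b S" unfolding Lon_def
    proof (intro CollectI conjI ballI)
      show "x \<in> S" using s1 \<open>x = s1\<close> by simp
      fix u assume uS: "u \<in> S"
      show "\<not> padj t b u x"
      proof
        assume p: "padj t b u x"
        then have "u \<noteq> x" using irr by auto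
        then have "x \<in> cnbhd_set t a b (S - {x})"
          unfolding cnbhd_set_def cnbhd_def using xV uS p sym by blast
        with xnot show False by simp
      qed
    qed
  qed
  show ?thesis
    using main[OF assms(8) assms(9) assms(10) adj12] main[OF assms(9) assms(8) _ ] adj12 assms(10)
    by metis
qed

end
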